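(* Let $0=x_1<x_2<\dots<x_{K+1}=L$, and for each element $e^k=[x_k,x_{k+1}]$ let $\rho,\mu$ be smooth positive functions on $e^k$ (possibly discontinuous across element interfaces), $Z_s=\sqrt{\rho\mu}$. Let $v,\sigma$ be functions that are smooth on each $e^k\times[0,\infty)$, possibly two-valued at interior nodes; denote by a superscript $k$ and arguments $x_k^+$, $x_{k+1}^-$ the one-sided traces taken from element $e^k$. Fix $r_0,r_L\in[-1,1]$ and, for each interior node $x_k$ ($2\le k\le K$), a frictional strength $\alpha_k\in[0,\infty]$. Define boundary/interface data ("hat-variables") as follows. (i) At $x_1=0$: $p_0=\frac12(Z_s(x_1^+)v(x_1^+)+\sigma(x_1^+))$, $\widehat v(x_1^+)=\frac{1+r_0}{Z_s(x_1^+)}p_0$, $\widehat\sigma(x_1^+)=(1-r_0)p_0$. (ii) At $x_{K+1}=L$: $q_L=\frac12(Z_s(x_{K+1}^-)v(x_{K+1}^-)-\sigma(x_{K+1}^-))$, $\widehat v(x_{K+1}^-)=\frac{1+r_L}{Z_s(x_{K+1}^-)}q_L$, $\widehat\sigma(x_{K+1}^-)=-(1-r_L)q_L$. (iii) At an interior node $x_k$: with $Z^-=Z_s(x_k^-)$, $Z^+=Z_s(x_k^+)$, $q^-=\frac12(Z^-v(x_k^-)-\sigma(x_k^-))$, $p^+=\frac12(Z^+v(x_k^+)+\sigma(x_k^+))$, $\eta_k=\frac{Z^-Z^+}{Z^-+Z^+}$, $\Phi_k=\eta_k(\frac{2}{Z^+}p^+-\frac{2}{Z^-}q^-)$, set $\widehat\sigma_k=\frac{\alpha_k}{\eta_k+\alpha_k}\Phi_k$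 (and $\widehat\sigma_k=\Phi_k$ if $\alpha_k=\infty$), $\widehat\sigma(x_k^\pm)=\widehat\sigma_k$, $\widehat v(x_k^-)=\frac{2q^-+\widehat\sigma_k}{Z^-}$, $\widehat v(x_k^+)=\frac{2p^+-\widehat\sigma_k}{Z^+}$. Define the flux fluctuations $$F(x_k,t)=\tfrac{Z_s(x_k^+)}{2}\big(v(x_k^+)-\widehat v(x_k^+)\big)-\tfrac12\big(\sigma(x_k^+)-\widehat\sigma(x_k^+)\big),$$ $$G(x_{k+1},t)=\tfrac{Z_s(x_{k+1}^-)}{2}\big(v(x_{k+1}^-)-\widehat v(x_{k+1}^-)\big)+\tfrac12\big(\sigma(x_{k+1}^-)-\widehat\sigma(x_{k+1}^-)\big).$$ Suppose that for all test functions $\phi_v,\phi_\sigma$ which are smooth on each element, $$\sum_{k=1}^K\Big(\int_{x_k}^{x_{k+1}}\big(\rho\phi_v\partial_tv-\phi_v\partial_x\sigma\big)dx+\phi_v(x_k^+)F(x_k,t)+\phi_v(x_{k+1}^-)G(x_{k+1},t)\Big)=0,$$ $$\sum_{k=1}^K\Big(\int_{x_k}^{x_{k+1}}\big(\tfrac1\mu\phi_\sigma\partial_t\sigma-\phi_\sigma\partial_xv\big)dx-\frac{\phi_\sigma(x_k^+)}{Z_s(x_k^+)}F(x_k,t)+\frac{\phi_\sigma(x_{k+1}^-)}{Z_s(x_{k+1}^-)}G(x_{k+1},t)\Big)=0.$$ Then, with $E(t)=\sum_{k=1}^K\frac12\int_{x_k}^{x_{k+1}}\big(\rho v^2+\frac1\mu\sigma^2\big)dx$,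 $$\frac{dE}{dt}=-\sum_{k=1}^K\Big(\frac{|F(x_k,t)|^2}{Z_s(x_k^+)}+\frac{|G(x_{k+1},t)|^2}{Z_s(x_{k+1}^-)}\Big)-\sum_{k=2}^K\frac{\alpha_k}{(\eta_k+\alpha_k)^2}\Phi_k^2-\frac{1-r_0^2}{Z_s(x_1^+)}p_0^2-\frac{1-r_L^2}{Z_s(x_{K+1}^-)}q_L^2,$$ where the term $\frac{\alpha_k}{(\eta_k+\alpha_k)^2}\Phi_k^2$ is interpreted as $0$ when $\alpha_k=\infty$. In particular $\frac{dE}{dt}\le0$.
   Context: This concerns the 1D elastic wave equation $\rho\partial_tv=\partial_x\sigma$, $\frac1\mu\partial_t\sigma=\partial_xv$ on $[0,L]$ written in a penalized weak form on a partition into elements. $Z_s=\sqrt{\rho\mu}$ is the shear impedance. The interior nodes carry frictional interface conditions (force balance and $\widehat\sigma=\alpha_k[\![\widehat v]\!]$), $\alpha_k=\infty$ meaning a locked (non-slipping) interface; the external boundaries carry the conditions $\frac{Z_s}{2}(1-r)v\mp\frac{1+r}{2}\sigma=0$ with reflection coefficients $r_0,r_L$. *)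

theory Defs
  imports "HOL-Analysis.Analysis" "HOL-Library.Extended_Real"
begin

text \<open>Elements are indexed k = 1..K, element k is the interval
  {x k .. x (Suc k)}. Material parameters rho k, mu k and the fields v k, sigma k
  are the restrictions to element k (so traces from element k are simply
  evaluations of v k at x k resp. x (Suc k)). Fields take arguments (space, time).
  "Smooth" is read as continuously differentiable (C1), with one-sided
  derivatives at the element end points.\<close>

definition C1_on :: "real set \<Rightarrow> (real \<Rightarrow> real) \<Rightarrow> bool" where
  "C1_on S f \<longleftrightarrow> (\<exists>f'. (\<forall>y\<in>S. (f has_real_derivative f' y) (at y within S)) \<and> continuous_on S f')"

definition elem_C1 :: "real \<Rightarrow> real \<Rightarrow> (real \<Rightarrow> real \<Rightarrow> real) \<Rightarrow> (real \<Rightarrow> real \<Rightarrow> real)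
    \<Rightarrow> (real \<Rightarrow> real \<Rightarrow> real) \<Rightarrow> bool" where
  "elem_C1 a b f fx ft \<longleftrightarrow>
     (\<forall>y\<in>{a..b}. \<forall>t\<ge>0.
        ((\<lambda>y'. f y' t) has_real_derivative fx y t) (at y within {a..b}) \<and>
        ((\<lambda>t'. f y t') has_real_derivative ft y t) (at t within {0..})) \<and>
     continuous_on ({a..b} \<times> {0..}) (\<lambda>(y,t). f y t) \<and>
     continuous_on ({a..b} \<times> {0..}) (\<lambda>(y,t). fx y t) \<and>
     continuous_on ({a..b} \<times> {0..}) (\<lambda>(y,t). ft y t)"

definition Zs :: "(nat \<Rightarrow> real \<Rightarrow> real) \<Rightarrow> (nat \<Rightarrow> real \<Rightarrow> real) \<Rightarrow> nat \<Rightarrow> real \<Rightarrow> real" where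
  "Zs \<rho> \<mu> k y = sqrt (\<rho> k y * \<mu> k y)"

definition pplus :: "real \<Rightarrow> real \<Rightarrow> real \<Rightarrow> real" where
  "pplus Z w s = (Z * w + s) / 2"

definition qminus :: "real \<Rightarrow> real \<Rightarrow> real \<Rightarrow> real" where
  "qminus Z w s = (Z * w - s) / 2"

type_synonym field = "nat \<Rightarrow> real \<Rightarrow> real \<Rightarrow> real"
type_synonym coef = "nat \<Rightarrow> real \<Rightarrow> real"

definition p0 :: "(nat \<Rightarrow> real) \<Rightarrow> coef \<Rightarrow> coef \<Rightarrow> field \<Rightarrow> field \<Rightarrow> real \<Rightarrow> real" where
  "p0 x \<rho> \<mu> v \<sigma> t = pplus (Zs \<rho> \<mu> 1 (x 1)) (v 1 (x 1) t) (\<sigma> 1 (x 1) t)"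

definition qL :: "nat \<Rightarrow> (nat \<Rightarrow> real) \<Rightarrow> coef \<Rightarrow> coef \<Rightarrow> field \<Rightarrow> field \<Rightarrow> real \<Rightarrow> real" where
  "qL K x \<rho> \<mu> v \<sigma> t = qminus (Zs \<rho> \<mu> K (x (Suc K))) (v K (x (Suc K)) t) (\<sigma> K (x (Suc K)) t)"

text \<open>Interior node k (2 \<le> k \<le> K): minus side is element k-1, plus side is element k.\<close>
definition qm_node :: "(nat \<Rightarrow> real) \<Rightarrow> coef \<Rightarrow> coef \<Rightarrow> field \<Rightarrow> field \<Rightarrow> nat \<Rightarrow> real \<Rightarrow> real" where
  "qm_node x \<rho> \<mu> v \<sigma> k t = qminus (Zs \<rho> \<mu> (k-1) (x k)) (v (k-1) (x k) t) (\<sigma> (k-1) (x k) t)"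

definition pp_node :: "(nat \<Rightarrow> real) \<Rightarrow> coef \<Rightarrow> coef \<Rightarrow> field \<Rightarrow> field \<Rightarrow> nat \<Rightarrow> real \<Rightarrow> real" where
  "pp_node x \<rho> \<mu> v \<sigma> k t = pplus (Zs \<rho> \<mu> k (x k)) (v k (x k) t) (\<sigma> k (x k) t)"

definition eta_node :: "(nat \<Rightarrow> real) \<Rightarrow> coef \<Rightarrow> coef \<Rightarrow> nat \<Rightarrow> real" where
  "eta_node x \<rho> \<mu> k = Zs \<rho> \<mu> (k-1) (x k) * Zs \<rho> \<mu> k (x k) / (Zs \<rho> \<mu> (k-1) (x k) + Zs \<rho> \<mu> k (x k))"

definition Phi_node :: "(nat \<Rightarrow> real) \<Rightarrow> coef \<Rightarrow> coef \<Rightarrow> field \<Rightarrow> field \<Rightarrow> nat \<Rightarrow> real \<Rightarrow> real" where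
  "Phi_node x \<rho> \<mu> v \<sigma> k t = eta_node x \<rho> \<mu> k *
     (2 / Zs \<rho> \<mu> k (x k) * pp_node x \<rho> \<mu> v \<sigma> k t - 2 / Zs \<rho> \<mu> (k-1) (x k) * qm_node x \<rho> \<mu> v \<sigma> k t)"

text \<open>Frictional strength alpha k in [0, \<infinity>] (ereal); \<infinity> = locked interface.\<close>
definition sighat_node :: "(nat \<Rightarrow> ereal) \<Rightarrow> (nat \<Rightarrow> real) \<Rightarrow> coef \<Rightarrow> coef \<Rightarrow> field \<Rightarrow> field \<Rightarrow> nat \<Rightarrow> real \<Rightarrow> real" where
  "sighat_node \<alpha> x \<rho> \<mu> v \<sigma> k t =
     (if \<alpha> k = \<infinity> then Phi_node x \<rho> \<mu> v \<sigma> k t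
      else real_of_ereal (\<alpha> k) / (eta_node x \<rho> \<mu> k + real_of_ereal (\<alpha> k)) * Phi_node x \<rho> \<mu> v \<sigma> k t)"

definition fric_diss :: "(nat \<Rightarrow> ereal) \<Rightarrow> (nat \<Rightarrow> real) \<Rightarrow> coef \<Rightarrow> coef \<Rightarrow> field \<Rightarrow> field \<Rightarrow> nat \<Rightarrow> real \<Rightarrow> real" where
  "fric_diss \<alpha> x \<rho> \<mu> v \<sigma> k t =
     (if \<alpha> k = \<infinity> then 0
      else real_of_ereal (\<alpha> k) / (eta_node x \<rho> \<mu> k + real_of_ereal (\<alpha> k))^2 * (Phi_node x \<rho> \<mu> v \<sigma> k t)^2)"

text \<open>Hat variables at the left end x k of element k (trace x_k^+) and at the right end
  x (k+1) of element k (trace x_{k+1}^-).\<close>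
definition vhat_left :: "real \<Rightarrow> (nat \<Rightarrow> ereal) \<Rightarrow> (nat \<Rightarrow> real) \<Rightarrow> coef \<Rightarrow> coef \<Rightarrow> field \<Rightarrow> field \<Rightarrow> nat \<Rightarrow> real \<Rightarrow> real" where
  "vhat_left r0 \<alpha> x \<rho> \<mu> v \<sigma> k t =
     (if k = 1 then (1 + r0) / Zs \<rho> \<mu> 1 (x 1) * p0 x \<rho> \<mu> v \<sigma> t
      else (2 * pp_node x \<rho> \<mu> v \<sigma> k t - sighat_node \<alpha> x \<rho> \<mu> v \<sigma> k t) / Zs \<rho> \<mu> k (x k))"

definition sighat_left :: "real \<Rightarrow> (nat \<Rightarrow> ereal) \<Rightarrow> (nat \<Rightarrow> real) \<Rightarrow> coef \<Rightarrow> coef \<Rightarrow> field \<Rightarrow> field \<Rightarrow> nat \<Rightarrow> real \<Rightarrow> real" where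
  "sighat_left r0 \<alpha> x \<rho> \<mu> v \<sigma> k t =
     (if k = 1 then (1 - r0) * p0 x \<rho> \<mu> v \<sigma> t
      else sighat_node \<alpha> x \<rho> \<mu> v \<sigma> k t)"

definition vhat_right :: "nat \<Rightarrow> real \<Rightarrow> (nat \<Rightarrow> ereal) \<Rightarrow> (nat \<Rightarrow> real) \<Rightarrow> coef \<Rightarrow> coef \<Rightarrow> field \<Rightarrow> field \<Rightarrow> nat \<Rightarrow> real \<Rightarrow> real" where
  "vhat_right K rL \<alpha> x \<rho> \<mu> v \<sigma> k t =
     (if k = K then (1 + rL) / Zs \<rho> \<mu> K (x (Suc K)) * qL K x \<rho> \<mu> v \<sigma> t
      else (2 * qm_node x \<rho> \<mu> v \<sigma> (Suc k) t + sighat_node \<alpha> x \<rho> \<mu> v \<sigma> (Suc k) t) / Zs \<rho> \<mu> k (x (Suc k)))"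

definition sighat_right :: "nat \<Rightarrow> real \<Rightarrow> (nat \<Rightarrow> ereal) \<Rightarrow> (nat \<Rightarrow> real) \<Rightarrow> coef \<Rightarrow> coef \<Rightarrow> field \<Rightarrow> field \<Rightarrow> nat \<Rightarrow> real \<Rightarrow> real" where
  "sighat_right K rL \<alpha> x \<rho> \<mu> v \<sigma> k t =
     (if k = K then - (1 - rL) * qL K x \<rho> \<mu> v \<sigma> t
      else sighat_node \<alpha> x \<rho> \<mu> v \<sigma> (Suc k) t)"

text \<open>Flux fluctuations: Fflux k t = F(x_k,t) (element k), Gflux k t = G(x_{k+1},t) (element k).\<close>
definition Fflux :: "real \<Rightarrow> (nat \<Rightarrow> ereal) \<Rightarrow> (nat \<Rightarrow> real) \<Rightarrow> coef \<Rightarrow> coef \<Rightarrow> field \<Rightarrow> field \<Rightarrow> nat \<Rightarrow> real \<Rightarrow> real" where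
  "Fflux r0 \<alpha> x \<rho> \<mu> v \<sigma> k t =
     Zs \<rho> \<mu> k (x k) / 2 * (v k (x k) t - vhat_left r0 \<alpha> x \<rho> \<mu> v \<sigma> k t)
     - (\<sigma> k (x k) t - sighat_left r0 \<alpha> x \<rho> \<mu> v \<sigma> k t) / 2"

definition Gflux :: "nat \<Rightarrow> real \<Rightarrow> (nat \<Rightarrow> ereal) \<Rightarrow> (nat \<Rightarrow> real) \<Rightarrow> coef \<Rightarrow> coef \<Rightarrow> field \<Rightarrow> field \<Rightarrow> nat \<Rightarrow> real \<Rightarrow> real" where
  "Gflux K rL \<alpha> x \<rho> \<mu> v \<sigma> k t =
     Zs \<rho> \<mu> k (x (Suc k)) / 2 * (v k (x (Suc k)) t - vhat_right K rL \<alpha> x \<rho> \<mu> v \<sigma> k t)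
     + (\<sigma> k (x (Suc k)) t - sighat_right K rL \<alpha> x \<rho> \<mu> v \<sigma> k t) / 2"

definition energy :: "nat \<Rightarrow> (nat \<Rightarrow> real) \<Rightarrow> coef \<Rightarrow> coef \<Rightarrow> field \<Rightarrow> field \<Rightarrow> real \<Rightarrow> real" where
  "energy K x \<rho> \<mu> v \<sigma> t =
     (\<Sum>k=1..K. 1/2 * integral {x k..x (Suc k)} (\<lambda>y. \<rho> k y * (v k y t)^2 + (\<sigma> k y t)^2 / \<mu> k y))"

end

theory Submission
  imports Defs
begin


lemma node_alg:
  fixes Zm Zp eta Phi sh q p vm sm vp sp :: real
  assumes Zm: "Zm>0" and Zp: "Zp>0"
    and q: "q = (Zm * vm - sm)/2" and p: "p = (Zp * vp+sp)/2"
    and eta: "eta = Zm * Zp/(Zm+Zp)" and Phi: "Phi = eta * (2/Zp * p - 2/Zm * q)"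
    and G: "G = Zm/2 * (vm - (2 * q+sh)/Zm) + (sm-sh)/2"
    and F: "F = Zp/2 * (vp - (2 * p - sh)/Zp) - (sp - sh)/2"
  shows "(vm * sm - vm * G - sm * G/Zm + G^2/Zm) + (-vp * sp - vp * F + sp * F/Zp + F^2/Zp) = sh * (sh - Phi)/eta"
proof -
  have G': "G = sm - sh" unfolding G q using Zm by (simp add: field_simps)
  have F': "F = sh - sp" unfolding F p using Zp by (simp add: field_simps)
  have R: "vm * sm - vm * G - sm * G/Zm + G^2/Zm = sh * (2 * q+sh)/Zm"
    unfolding G' q using Zm by (simp add: field_simps power2_eq_square)
  have L: "-vp * sp - vp * F + sp * F/Zp + F^2/Zp = - sh * (2 * p-sh)/Zp"
    unfolding F' p using Zp by (simp add: field_simps power2_eq_square)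
  have e: "1/eta = 1/Zm + 1/Zp" unfolding eta using Zm Zp by (simp add: field_simps)
  have en: "eta \<noteq> 0" unfolding eta using Zm Zp by simp
  have "sh * (sh - Phi)/eta = sh * sh * (1/eta) - sh * (2/Zp * p - 2/Zm * q)"
    unfolding Phi using en by (simp add: field_simps)
  also have "\<dots> = sh * (2 * q+sh)/Zm - sh * (2 * p-sh)/Zp"
    unfolding e using Zm Zp by (simp add: field_simps)
  finally have "sh * (2 * q+sh)/Zm - sh * (2 * p-sh)/Zp = sh * (sh - Phi)/eta" by simp
  then show ?thesis using R L by simp
qed

lemma node_fric:
  fixes eta a Phi :: real
  assumes "eta > 0" "a \<ge> 0"
  shows "(a/(eta+a) * Phi)  *  ((a/(eta+a) * Phi) - Phi)/eta = - (a/(eta+a)^2  *  Phi^2)"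
proof -
  obtain d where d: "d = eta + a" by simp
  have dp: "d > 0" using assms d by simp
  have "a/d * Phi - Phi = -(eta/d) * Phi" using dp d by (simp add: field_simps)
  then have "(a/d * Phi) * ((a/d * Phi) - Phi)/eta = (a/d * Phi) * (-(eta/d) * Phi)/eta"
    by simp
  also have "\<dots> = - (a/d^2 * Phi^2)"
    using dp assms by (simp add: field_simps power2_eq_square)
  finally have "(a/d * Phi) * ((a/d * Phi) - Phi)/eta = - (a/d^2 * Phi^2)" .
  then show ?thesis using d by simp
qed

lemma left_bd:
  fixes Z r v s p F :: real
  assumes Z: "Z > 0" and p: "p = (Z * v+s)/2"
   and F: "F = Z/2 * (v - (1+r)/Z * p) - (s - (1-r) * p)/2"
  shows "-v * s - v * F + s * F/Z + F^2/Z = - ((1 - r^2)/Z * p^2)"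
  unfolding F p using Z by (simp add: field_simps power2_eq_square)

lemma right_bd:
  fixes Z r v s q G :: real
  assumes Z: "Z > 0" and q: "q = (Z * v-s)/2"
   and G: "G = Z/2 * (v - (1+r)/Z * q) + (s - (- (1-r) * q))/2"
  shows "v * s - v * G - s * G/Z + G^2/Z = - ((1 - r^2)/Z * q^2)"
  unfolding G q using Z by (simp add: field_simps power2_eq_square)



lemma cont_slice:
  assumes "continuous_on (A \<times> B) (\<lambda>(y,t). f y t)" "t \<in> B"
  shows "continuous_on A (\<lambda>y. f y t)"
proof -
  have "continuous_on A (\<lambda>y. (\<lambda>(y,t). f y t) (y, t))"
    by (rule continuous_on_compose2[OF assms(1)]) (use assms(2) in \<open>auto intro!: continuous_intros\<close>)
  then show ?thesis by simp
qed

lemma cont_swap: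
  assumes "continuous_on (A \<times> B) (\<lambda>(y,t). f y t)"
  shows "continuous_on (B \<times> A) (\<lambda>p. f (snd p) (fst p))"
proof -
  have "continuous_on (B \<times> A) (\<lambda>p. (\<lambda>(y,t). f y t) (snd p, fst p))"
    by (rule continuous_on_compose2[OF assms(1)]) (auto intro!: continuous_intros)
  then show ?thesis by simp
qed

lemma cont_snd:
  assumes "continuous_on A g"
  shows "continuous_on (B \<times> A) (\<lambda>p. g (snd p))"
  by (rule continuous_on_compose2[OF assms]) (auto intro!: continuous_intros)

lemma elem_facts:
  assumes e: "elem_C1 a b f fx ft" and t: "t \<ge> 0"
  shows "\<forall>y\<in>{a..b}. ((\<lambda>y'. f y' t) has_real_derivative fx y t) (at y within {a..b})"
    and "continuous_on {a..b} (\<lambda>y. f y t)" "continuous_on {a..b} (\<lambda>y. fx y t)"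
    and "continuous_on {a..b} (\<lambda>y. ft y t)"
    and "\<forall>y\<in>{a..b}. \<forall>s\<ge>0. ((\<lambda>s. f y s) has_real_derivative ft y s) (at s within {0..})"
    and "continuous_on ({0..} \<times> {a..b}) (\<lambda>p. f (snd p) (fst p))"
    and "continuous_on ({0..} \<times> {a..b}) (\<lambda>p. ft (snd p) (fst p))"
  using e t unfolding elem_C1_def
  by (auto intro: cont_slice cont_swap)

lemma elem_energy:
  fixes \<rho> \<mu> :: "real \<Rightarrow> real" and v \<sigma> vx vt \<sigma>x \<sigma>t :: "real \<Rightarrow> real \<Rightarrow> real"
  assumes ev: "elem_C1 a b v vx vt" and es: "elem_C1 a b \<sigma> \<sigma>x \<sigma>t"
   and cr: "continuous_on {a..b} \<rho>" and cm: "continuous_on {a..b} \<mu>"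
   and mp: "\<forall>y\<in>{a..b}. \<mu> y > 0" and t: "t \<ge> 0"
  shows "((\<lambda>s. integral {a..b} (\<lambda>y. \<rho> y * (v y s)^2 + (\<sigma> y s)^2 / \<mu> y)) has_real_derivative
     integral {a..b} (\<lambda>y. \<rho> y * (2 * v y t * vt y t) + 2 * \<sigma> y t * \<sigma>t y t / \<mu> y)) (at t within {0..})"
proof -
  have L: "((\<lambda>s. integral (cbox a b) (\<lambda>y. \<rho> y * (v y s)^2 + (\<sigma> y s)^2 / \<mu> y)) has_field_derivative
     integral (cbox a b) (\<lambda>y. \<rho> y * (2 * v y t * vt y t) + 2 * \<sigma> y t * \<sigma>t y t / \<mu> y)) (at t within {0..})"
  proof (rule leibniz_rule_field_derivative[where f = "\<lambda>s y. \<rho> y * (v y s)^2 + (\<sigma> y s)^2 / \<mu> y"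
        and fx = "\<lambda>s y. \<rho> y * (2 * v y s * vt y s) + 2 * \<sigma> y s * \<sigma>t y s / \<mu> y"])
    fix s y assume s: "s \<in> {0::real..}" and y: "y \<in> cbox a b"
    have dv: "((\<lambda>s. v y s) has_real_derivative vt y s) (at s within {0..})"
      using elem_facts(5)[OF ev, of 0] s y by auto
    have ds: "((\<lambda>s. \<sigma> y s) has_real_derivative \<sigma>t y s) (at s within {0..})"
      using elem_facts(5)[OF es, of 0] s y by auto
    have "\<mu> y \<noteq> 0" using mp y by force
    show "((\<lambda>s. \<rho> y * (v y s)^2 + (\<sigma> y s)^2 / \<mu> y) has_real_derivative
        \<rho> y * (2 * v y s * vt y s) + 2 * \<sigma> y s * \<sigma>t y s / \<mu> y) (at s within {0..})"
      by (rule derivative_eq_intros dv ds refl | simp add: \<open>\<mu> y \<noteq> 0\<close>)+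
  next
    fix s :: real assume s: "s \<in> {0..}"
    have "continuous_on {a..b} (\<lambda>y. \<rho> y * (v y s)^2 + (\<sigma> y s)^2 / \<mu> y)"
      using elem_facts(2)[OF ev, of s] elem_facts(2)[OF es, of s] cr cm mp s
      by (auto intro!: continuous_intros)
    then show "(\<lambda>y. \<rho> y * (v y s)^2 + (\<sigma> y s)^2 / \<mu> y) integrable_on cbox a b"
      by (simp add: integrable_continuous_interval)
  next
    show "continuous_on ({0..} \<times> cbox a b) (\<lambda>(s, y). \<rho> y * (2 * v y s * vt y s) + 2 * \<sigma> y s * \<sigma>t y s / \<mu> y)"
      unfolding case_prod_beta' cbox_interval
      using elem_facts(6,7)[OF ev t] elem_facts(6,7)[OF es t] cont_snd[OF cr, of "{0..}"]
        cont_snd[OF cm, of "{0..}"] mp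
      by (auto intro!: continuous_intros)
  qed (use t in auto)
  then show ?thesis by (simp add: cbox_interval)
qed

lemma elem_identity:
  fixes \<rho> \<mu> :: "real \<Rightarrow> real" and v \<sigma> vx vt \<sigma>x \<sigma>t :: "real \<Rightarrow> real \<Rightarrow> real"
  assumes ev: "elem_C1 a b v vx vt" and es: "elem_C1 a b \<sigma> \<sigma>x \<sigma>t"
   and cr: "continuous_on {a..b} \<rho>" and cm: "continuous_on {a..b} \<mu>"
   and mp: "\<forall>y\<in>{a..b}. \<mu> y > 0" and t: "t \<ge> 0" and ab: "a \<le> b"
  shows "1/2 * integral {a..b} (\<lambda>y. \<rho> y * (2 * v y t * vt y t) + 2 * \<sigma> y t * \<sigma>t y t / \<mu> y)
    = integral {a..b} (\<lambda>y. \<rho> y * v y t * vt y t - v y t * \<sigma>x y t)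
      + integral {a..b} (\<lambda>y. \<sigma> y t * \<sigma>t y t / \<mu> y - \<sigma> y t * vx y t)
      + (v b t * \<sigma> b t - v a t * \<sigma> a t)"
proof -
  note c = elem_facts(2,3,4)[OF ev t] elem_facts(2,3,4)[OF es t]
  have mn: "\<forall>y\<in>{a..b}. \<mu> y \<noteq> 0" using mp by force
  have "continuous_on {a..b} (\<lambda>y. \<rho> y * v y t * vt y t - v y t * \<sigma>x y t)"
    using c cr by (auto intro!: continuous_intros)
  then have h1: "((\<lambda>y. \<rho> y * v y t * vt y t - v y t * \<sigma>x y t) has_integral
      integral {a..b} (\<lambda>y. \<rho> y * v y t * vt y t - v y t * \<sigma>x y t)) {a..b}"
    by (simp add: integrable_continuous_interval integrable_integral)
  have "continuous_on {a..b} (\<lambda>y. \<sigma> y t * \<sigma>t y t / \<mu> y - \<sigma> y t * vx y t)"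
    using c cm mn by (auto intro!: continuous_intros)
  then have h2: "((\<lambda>y. \<sigma> y t * \<sigma>t y t / \<mu> y - \<sigma> y t * vx y t) has_integral
      integral {a..b} (\<lambda>y. \<sigma> y t * \<sigma>t y t / \<mu> y - \<sigma> y t * vx y t)) {a..b}"
    by (simp add: integrable_continuous_interval integrable_integral)
  have h3: "((\<lambda>y. v y t * \<sigma>x y t + vx y t * \<sigma> y t) has_integral (v b t * \<sigma> b t - v a t * \<sigma> a t)) {a..b}"
  proof (rule fundamental_theorem_of_calculus[OF ab, where f = "\<lambda>y. v y t * \<sigma> y t"])
    fix y assume y: "y \<in> {a..b}"
    have "((\<lambda>y. v y t) has_real_derivative vx y t) (at y within {a..b})"
      using elem_facts(1)[OF ev t] y by auto
    moreover have "((\<lambda>y. \<sigma> y t) has_real_derivative \<sigma>x y t) (at y within {a..b})"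
      using elem_facts(1)[OF es t] y by auto
    ultimately have "((\<lambda>y. v y t * \<sigma> y t) has_real_derivative v y t * \<sigma>x y t + vx y t * \<sigma> y t) (at y within {a..b})"
      by (auto intro!: derivative_eq_intros)
    then show "((\<lambda>y. v y t * \<sigma> y t) has_vector_derivative v y t * \<sigma>x y t + vx y t * \<sigma> y t) (at y within {a..b})"
      by (simp add: has_real_derivative_iff_has_vector_derivative)
  qed
  have "((\<lambda>y. (\<rho> y * v y t * vt y t - v y t * \<sigma>x y t) + (\<sigma> y t * \<sigma>t y t / \<mu> y - \<sigma> y t * vx y t)
      + (v y t * \<sigma>x y t + vx y t * \<sigma> y t)) has_integral
      integral {a..b} (\<lambda>y. \<rho> y * v y t * vt y t - v y t * \<sigma>x y t)
      + integral {a..b} (\<lambda>y. \<sigma> y t * \<sigma>t y t / \<mu> y - \<sigma> y t * vx y t)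
      + (v b t * \<sigma> b t - v a t * \<sigma> a t)) {a..b}"
    by (intro has_integral_add h1 h2 h3)
  then have "((\<lambda>y. 1/2 * (\<rho> y * (2 * v y t * vt y t) + 2 * \<sigma> y t * \<sigma>t y t / \<mu> y)) has_integral
      integral {a..b} (\<lambda>y. \<rho> y * v y t * vt y t - v y t * \<sigma>x y t)
      + integral {a..b} (\<lambda>y. \<sigma> y t * \<sigma>t y t / \<mu> y - \<sigma> y t * vx y t)
      + (v b t * \<sigma> b t - v a t * \<sigma> a t)) {a..b}"
    by (rule has_integral_eq[rotated]) (simp add: algebra_simps)
  then have "integral {a..b} (\<lambda>y. 1/2 * (\<rho> y * (2 * v y t * vt y t) + 2 * \<sigma> y t * \<sigma>t y t / \<mu> y))
    = integral {a..b} (\<lambda>y. \<rho> y * v y t * vt y t - v y t * \<sigma>x y t)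
      + integral {a..b} (\<lambda>y. \<sigma> y t * \<sigma>t y t / \<mu> y - \<sigma> y t * vx y t)
      + (v b t * \<sigma> b t - v a t * \<sigma> a t)"
    by (rule integral_unique)
  then show ?thesis by (simp only: integral_mult_right)
qed



theorem theorem1:
  fixes K :: nat and L r0 rL :: real and x :: "nat \<Rightarrow> real"
    and \<rho> \<mu> :: "nat \<Rightarrow> real \<Rightarrow> real"
    and v \<sigma> vx vt \<sigma>x \<sigma>t :: "nat \<Rightarrow> real \<Rightarrow> real \<Rightarrow> real"
    and \<alpha> :: "nat \<Rightarrow> ereal"
  assumes K: "K \<ge> 1"
    and x1: "x 1 = 0" and xL: "x (Suc K) = L"
    and xmono: "\<forall>k\<in>{1..K}. x k < x (Suc k)"
    and rho_pos: "\<forall>k\<in>{1..K}. \<forall>y\<in>{x k..x (Suc k)}. \<rho> k y > 0"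
    and mu_pos: "\<forall>k\<in>{1..K}. \<forall>y\<in>{x k..x (Suc k)}. \<mu> k y > 0"
    and rho_C1: "\<forall>k\<in>{1..K}. C1_on {x k..x (Suc k)} (\<rho> k)"
    and mu_C1: "\<forall>k\<in>{1..K}. C1_on {x k..x (Suc k)} (\<mu> k)"
    and v_C1: "\<forall>k\<in>{1..K}. elem_C1 (x k) (x (Suc k)) (v k) (vx k) (vt k)"
    and sigma_C1: "\<forall>k\<in>{1..K}. elem_C1 (x k) (x (Suc k)) (\<sigma> k) (\<sigma>x k) (\<sigma>t k)"
    and r0: "-1 \<le> r0" "r0 \<le> 1" and rL: "-1 \<le> rL" "rL \<le> 1"
    and alpha: "\<forall>k\<in>{2..K}. \<alpha> k \<ge> 0"
    and weak_v: "\<forall>t\<ge>0. \<forall>\<phi>v :: nat \<Rightarrow> real \<Rightarrow> real.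
        (\<forall>k\<in>{1..K}. C1_on {x k..x (Suc k)} (\<phi>v k)) \<longrightarrow>
        (\<Sum>k=1..K. integral {x k..x (Suc k)} (\<lambda>y. \<rho> k y * \<phi>v k y * vt k y t - \<phi>v k y * \<sigma>x k y t)
            + \<phi>v k (x k) * Fflux r0 \<alpha> x \<rho> \<mu> v \<sigma> k t
            + \<phi>v k (x (Suc k)) * Gflux K rL \<alpha> x \<rho> \<mu> v \<sigma> k t) = 0"
    and weak_sigma: "\<forall>t\<ge>0. \<forall>\<phi>s :: nat \<Rightarrow> real \<Rightarrow> real.
        (\<forall>k\<in>{1..K}. C1_on {x k..x (Suc k)} (\<phi>s k)) \<longrightarrow>
        (\<Sum>k=1..K. integral {x k..x (Suc k)} (\<lambda>y. \<phi>s k y * \<sigma>t k y t / \<mu> k y - \<phi>s k y * vx k y t)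
            - \<phi>s k (x k) / Zs \<rho> \<mu> k (x k) * Fflux r0 \<alpha> x \<rho> \<mu> v \<sigma> k t
            + \<phi>s k (x (Suc k)) / Zs \<rho> \<mu> k (x (Suc k)) * Gflux K rL \<alpha> x \<rho> \<mu> v \<sigma> k t) = 0"
  shows "\<forall>t\<ge>0.
     (let dE = - (\<Sum>k=1..K. (Fflux r0 \<alpha> x \<rho> \<mu> v \<sigma> k t)^2 / Zs \<rho> \<mu> k (x k)
                          + (Gflux K rL \<alpha> x \<rho> \<mu> v \<sigma> k t)^2 / Zs \<rho> \<mu> k (x (Suc k)))
               - (\<Sum>k=2..K. fric_diss \<alpha> x \<rho> \<mu> v \<sigma> k t)
               - (1 - r0^2) / Zs \<rho> \<mu> 1 (x 1) * (p0 x \<rho> \<mu> v \<sigma> t)^2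
               - (1 - rL^2) / Zs \<rho> \<mu> K (x (Suc K)) * (qL K x \<rho> \<mu> v \<sigma> t)^2
      in ((\<lambda>s. energy K x \<rho> \<mu> v \<sigma> s) has_real_derivative dE) (at t within {0..}) \<and> dE \<le> 0)"
  proof (intro allI impI)
  fix t :: real assume t: "t \<ge> 0"
  define F where "F = (\<lambda>k. Fflux r0 \<alpha> x \<rho> \<mu> v \<sigma> k t)"
  define G where "G = (\<lambda>k. Gflux K rL \<alpha> x \<rho> \<mu> v \<sigma> k t)"
  define Za where "Za = (\<lambda>k. Zs \<rho> \<mu> k (x k))"
  define Zb where "Zb = (\<lambda>k. Zs \<rho> \<mu> k (x (Suc k)))"
  define I1 where "I1 = (\<lambda>k. integral {x k..x (Suc k)} (\<lambda>y. \<rho> k y * v k y t * vt k y t - v k y t * \<sigma>x k y t))"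
  define I2 where "I2 = (\<lambda>k. integral {x k..x (Suc k)} (\<lambda>y. \<sigma> k y t * \<sigma>t k y t / \<mu> k y - \<sigma> k y t * vx k y t))"
  define Lt where "Lt = (\<lambda>k. - v k (x k) t * \<sigma> k (x k) t - v k (x k) t * F k + \<sigma> k (x k) t * F k / Za k + (F k)^2 / Za k)"
  define Rt where "Rt = (\<lambda>k. v k (x (Suc k)) t * \<sigma> k (x (Suc k)) t - v k (x (Suc k)) t * G k - \<sigma> k (x (Suc k)) t * G k / Zb k + (G k)^2 / Zb k)"
  have Zpos: "Zs \<rho> \<mu> k y > 0" if "k \<in> {1..K}" "y \<in> {x k..x (Suc k)}" for k y
    using rho_pos mu_pos that unfolding Zs_def by auto
  have xle: "x k \<le> x (Suc k)" if "k \<in> {1..K}" for k using xmono that by force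
  have Za: "Za k > 0" if "k \<in> {1..K}" for k
    unfolding Za_def using Zpos[OF that, of "x k"] xle[OF that] by simp
  have Zb: "Zb k > 0" if "k \<in> {1..K}" for k
    unfolding Zb_def using Zpos[OF that, of "x (Suc k)"] xle[OF that] by simp
  have contr: "continuous_on {x k..x (Suc k)} (\<rho> k)" if "k \<in> {1..K}" for k
    using rho_C1 that unfolding C1_on_def by (metis DERIV_continuous_on)
  have contm: "continuous_on {x k..x (Suc k)} (\<mu> k)" if "k \<in> {1..K}" for k
    using mu_C1 that unfolding C1_on_def by (metis DERIV_continuous_on)
  have mp: "\<forall>y\<in>{x k..x (Suc k)}. \<mu> k y > 0" if "k \<in> {1..K}" for k
    using mu_pos that by auto
  have dE: "((\<lambda>s. energy K x \<rho> \<mu> v \<sigma> s) has_real_derivative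
     (\<Sum>k=1..K. 1/2 * integral {x k..x (Suc k)} (\<lambda>y. \<rho> k y * (2 * v k y t * vt k y t) + 2 * \<sigma> k y t * \<sigma>t k y t / \<mu> k y)))
     (at t within {0..})"
    unfolding energy_def
  proof (rule DERIV_sum, rule DERIV_cmult)
    fix k assume k: "k \<in> {1..K}"
    show "((\<lambda>s. integral {x k..x (Suc k)} (\<lambda>y. \<rho> k y * (v k y s)^2 + (\<sigma> k y s)^2 / \<mu> k y)) has_real_derivative
     integral {x k..x (Suc k)} (\<lambda>y. \<rho> k y * (2 * v k y t * vt k y t) + 2 * \<sigma> k y t * \<sigma>t k y t / \<mu> k y)) (at t within {0..})"
      by (rule elem_energy[OF _ _ contr[OF k] contm[OF k] mp[OF k] t]) (use v_C1 sigma_C1 k in auto)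
  qed
  have S1: "(\<Sum>k=1..K. 1/2 * integral {x k..x (Suc k)} (\<lambda>y. \<rho> k y * (2 * v k y t * vt k y t) + 2 * \<sigma> k y t * \<sigma>t k y t / \<mu> k y))
     = (\<Sum>k=1..K. I1 k + I2 k + (v k (x (Suc k)) t * \<sigma> k (x (Suc k)) t - v k (x k) t * \<sigma> k (x k) t))"
  proof (rule sum.cong[OF refl])
    fix k assume k: "k \<in> {1..K}"
    show "1/2 * integral {x k..x (Suc k)} (\<lambda>y. \<rho> k y * (2 * v k y t * vt k y t) + 2 * \<sigma> k y t * \<sigma>t k y t / \<mu> k y)
      = I1 k + I2 k + (v k (x (Suc k)) t * \<sigma> k (x (Suc k)) t - v k (x k) t * \<sigma> k (x k) t)"
      unfolding I1_def I2_def
      by (rule elem_identity[OF _ _ contr[OF k] contm[OF k] mp[OF k] t xle[OF k]]) (use v_C1 sigma_C1 k in auto)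
  qed
  have C1v: "\<forall>k\<in>{1..K}. C1_on {x k..x (Suc k)} (\<lambda>y. v k y t)"
  proof
    fix k assume k: "k \<in> {1..K}"
    have e: "elem_C1 (x k) (x (Suc k)) (v k) (vx k) (vt k)" using v_C1 k by auto
    show "C1_on {x k..x (Suc k)} (\<lambda>y. v k y t)"
      unfolding C1_on_def using elem_facts(1,3)[OF e t] by (intro exI[where x="\<lambda>y. vx k y t"]) simp
  qed
  have C1s: "\<forall>k\<in>{1..K}. C1_on {x k..x (Suc k)} (\<lambda>y. \<sigma> k y t)"
  proof
    fix k assume k: "k \<in> {1..K}"
    have e: "elem_C1 (x k) (x (Suc k)) (\<sigma> k) (\<sigma>x k) (\<sigma>t k)" using sigma_C1 k by auto
    show "C1_on {x k..x (Suc k)} (\<lambda>y. \<sigma> k y t)"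
      unfolding C1_on_def using elem_facts(1,3)[OF e t] by (intro exI[where x="\<lambda>y. \<sigma>x k y t"]) simp
  qed
  have W1: "(\<Sum>k=1..K. I1 k + v k (x k) t * F k + v k (x (Suc k)) t * G k) = 0"
    using weak_v[rule_format, OF t, of "\<lambda>k y. v k y t"] C1v unfolding I1_def F_def G_def by simp
  have W2: "(\<Sum>k=1..K. I2 k - \<sigma> k (x k) t / Za k * F k + \<sigma> k (x (Suc k)) t / Zb k * G k) = 0"
    using weak_sigma[rule_format, OF t, of "\<lambda>k y. \<sigma> k y t"] C1s unfolding I2_def F_def G_def Za_def Zb_def by simp
  have S2: "(\<Sum>k=1..K. I1 k + I2 k + (v k (x (Suc k)) t * \<sigma> k (x (Suc k)) t - v k (x k) t * \<sigma> k (x k) t))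
     = (\<Sum>k=1..K. I1 k + v k (x k) t * F k + v k (x (Suc k)) t * G k)
     + (\<Sum>k=1..K. I2 k - \<sigma> k (x k) t / Za k * F k + \<sigma> k (x (Suc k)) t / Zb k * G k)
     + (\<Sum>k=1..K. Lt k + Rt k - ((F k)^2 / Za k + (G k)^2 / Zb k))"
    unfolding sum.distrib[symmetric]
  proof (rule sum.cong[OF refl])
    fix k assume k: "k \<in> {1..K}"
    show "I1 k + I2 k + (v k (x (Suc k)) t * \<sigma> k (x (Suc k)) t - v k (x k) t * \<sigma> k (x k) t)
     = I1 k + v k (x k) t * F k + v k (x (Suc k)) t * G k
     + (I2 k - \<sigma> k (x k) t / Za k * F k + \<sigma> k (x (Suc k)) t / Zb k * G k)
     + (Lt k + Rt k - ((F k)^2 / Za k + (G k)^2 / Zb k))"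
      unfolding Lt_def Rt_def using Za[OF k] Zb[OF k] by (simp add: field_simps)
  qed
  have S3: "(\<Sum>k=1..K. Lt k + Rt k - ((F k)^2 / Za k + (G k)^2 / Zb k))
     = (\<Sum>k=1..K. Lt k + Rt k) - (\<Sum>k=1..K. (F k)^2 / Za k + (G k)^2 / Zb k)"
    by (simp add: sum_subtractf)
  obtain m where m: "K = Suc m" using K by (cases K) auto
  have S4: "(\<Sum>k=1..K. Lt k + Rt k) = Lt 1 + Rt K + (\<Sum>k=2..K. Rt (k-1) + Lt k)"
  proof -
    have a: "(\<Sum>k=1..K. Lt k) = Lt 1 + (\<Sum>k=2..K. Lt k)"
      unfolding m by (subst sum.atLeast_Suc_atMost) (auto simp: numeral_2_eq_2)
    have b: "(\<Sum>k=1..K. Rt k) = (\<Sum>k=1..m. Rt k) + Rt K"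
      unfolding m by simp
    have c: "(\<Sum>k=2..K. Rt (k-1)) = (\<Sum>k=1..m. Rt k)"
      unfolding m using sum.shift_bounds_cl_Suc_ivl[of "\<lambda>k. Rt (k-1)" 1 m] by (simp add: numeral_2_eq_2)
    show ?thesis using a b c by (simp add: sum.distrib)
  qed
  have Lt1: "Lt 1 = - ((1 - r0^2) / Zs \<rho> \<mu> 1 (x 1) * (p0 x \<rho> \<mu> v \<sigma> t)^2)"
    unfolding Lt_def Za_def
    apply (rule left_bd[where v = "v 1 (x 1) t" and s = "\<sigma> 1 (x 1) t"])
    using Za[of 1] K apply (simp add: Za_def)
     apply (simp add: p0_def pplus_def)
    apply (simp add: F_def Fflux_def vhat_left_def sighat_left_def Za_def)
    done
  have RtK: "Rt K = - ((1 - rL^2) / Zs \<rho> \<mu> K (x (Suc K)) * (qL K x \<rho> \<mu> v \<sigma> t)^2)"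
    unfolding Rt_def Zb_def
    apply (rule right_bd[where v = "v K (x (Suc K)) t" and s = "\<sigma> K (x (Suc K)) t"])
    using Zb[of K] K apply (simp add: Zb_def)
     apply (simp add: qL_def qminus_def)
    apply (simp add: G_def Gflux_def vhat_right_def sighat_right_def Zb_def)
    done
  have node: "Rt (k-1) + Lt k = - fric_diss \<alpha> x \<rho> \<mu> v \<sigma> k t" if k: "k \<in> {2..K}" for k
  proof -
    have k1: "k - 1 \<in> {1..K}" "Suc (k-1) = k" "k \<in> {1..K}" "k - 1 \<noteq> K" "k \<noteq> 1" "Suc (k - Suc 0) = k" "k - Suc 0 \<noteq> K" "k \<noteq> Suc 0" using k by auto
    have Zm: "Zs \<rho> \<mu> (k-1) (x k) > 0" using Zb[OF k1(1)] k1(2) unfolding Zb_def by simp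
    have Zp: "Zs \<rho> \<mu> k (x k) > 0" using Za[OF k1(3)] unfolding Za_def by simp
    have eq: "Rt (k-1) + Lt k = sighat_node \<alpha> x \<rho> \<mu> v \<sigma> k t * (sighat_node \<alpha> x \<rho> \<mu> v \<sigma> k t - Phi_node x \<rho> \<mu> v \<sigma> k t) / eta_node x \<rho> \<mu> k"
      unfolding Rt_def Lt_def Za_def Zb_def k1(2)
      apply (rule node_alg[OF Zm Zp, where q = "qm_node x \<rho> \<mu> v \<sigma> k t" and p = "pp_node x \<rho> \<mu> v \<sigma> k t"])
           apply (simp add: qm_node_def qminus_def)
          apply (simp add: pp_node_def pplus_def)
         apply (simp add: eta_node_def)
        apply (simp add: Phi_node_def)
       apply (simp add: G_def Gflux_def vhat_right_def sighat_right_def k1)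
      apply (simp add: F_def Fflux_def vhat_left_def sighat_left_def k1)
      done
    have etap: "eta_node x \<rho> \<mu> k > 0" unfolding eta_node_def using Zm Zp by simp
    show ?thesis
    proof (cases "\<alpha> k = \<infinity>")
      case True
      then show ?thesis using eq by (simp add: sighat_node_def fric_diss_def)
    next
      case False
      have a0: "real_of_ereal (\<alpha> k) \<ge> 0" using alpha k by (simp add: real_of_ereal_pos)
      show ?thesis using eq False node_fric[OF etap a0] by (simp add: sighat_node_def fric_diss_def)
    qed
  qed
  have S5: "(\<Sum>k=2..K. Rt (k-1) + Lt k) = - (\<Sum>k=2..K. fric_diss \<alpha> x \<rho> \<mu> v \<sigma> k t)"
    using node by (simp add: sum_negf[symmetric])
  have fric_nn: "fric_diss \<alpha> x \<rho> \<mu> v \<sigma> k t \<ge> 0" if k: "k \<in> {2..K}" for k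
  proof -
    have k1: "k - 1 \<in> {1..K}" "Suc (k-1) = k" "k \<in> {1..K}" using k by auto
    have Zm: "Zs \<rho> \<mu> (k-1) (x k) > 0" using Zb[OF k1(1)] k1(2) unfolding Zb_def by simp
    have Zp: "Zs \<rho> \<mu> k (x k) > 0" using Za[OF k1(3)] unfolding Za_def by simp
    have etap: "eta_node x \<rho> \<mu> k > 0" unfolding eta_node_def using Zm Zp by simp
    have a0: "real_of_ereal (\<alpha> k) \<ge> 0" using alpha k by (simp add: real_of_ereal_pos)
    show ?thesis unfolding fric_diss_def using etap a0 by auto
  qed
  have Fnn: "(\<Sum>k=1..K. (F k)^2 / Za k + (G k)^2 / Zb k) \<ge> 0"
  proof (rule sum_nonneg)
    fix k assume k: "k \<in> {1..K}"
    show "0 \<le> (F k)^2 / Za k + (G k)^2 / Zb k"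
      using Za[OF k] Zb[OF k] by (intro add_nonneg_nonneg divide_nonneg_pos) auto
  qed
  have r0n: "1 - r0^2 \<ge> 0" using r0 by (simp add: abs_square_le_1 abs_le_iff)
  have rLn: "1 - rL^2 \<ge> 0" using rL by (simp add: abs_square_le_1 abs_le_iff)
  have Z1: "Zs \<rho> \<mu> 1 (x 1) > 0" using Za[of 1] K unfolding Za_def by simp
  have ZK: "Zs \<rho> \<mu> K (x (Suc K)) > 0" using Zb[of K] K unfolding Zb_def by simp
  define dE where "dE = - (\<Sum>k=1..K. (Fflux r0 \<alpha> x \<rho> \<mu> v \<sigma> k t)^2 / Zs \<rho> \<mu> k (x k)
                          + (Gflux K rL \<alpha> x \<rho> \<mu> v \<sigma> k t)^2 / Zs \<rho> \<mu> k (x (Suc k)))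
               - (\<Sum>k=2..K. fric_diss \<alpha> x \<rho> \<mu> v \<sigma> k t)
               - (1 - r0^2) / Zs \<rho> \<mu> 1 (x 1) * (p0 x \<rho> \<mu> v \<sigma> t)^2
               - (1 - rL^2) / Zs \<rho> \<mu> K (x (Suc K)) * (qL K x \<rho> \<mu> v \<sigma> t)^2"
  have val: "(\<Sum>k=1..K. 1/2 * integral {x k..x (Suc k)} (\<lambda>y. \<rho> k y * (2 * v k y t * vt k y t) + 2 * \<sigma> k y t * \<sigma>t k y t / \<mu> k y)) = dE"
  proof -
    have v1: "(\<Sum>k=1..K. 1/2 * integral {x k..x (Suc k)} (\<lambda>y. \<rho> k y * (2 * v k y t * vt k y t) + 2 * \<sigma> k y t * \<sigma>t k y t / \<mu> k y))
       = (\<Sum>k=1..K. Lt k + Rt k) - (\<Sum>k=1..K. (F k)^2 / Za k + (G k)^2 / Zb k)"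
      using S1 S2 W1 W2 S3 by linarith
    have v2: "(\<Sum>k=1..K. Lt k + Rt k) = Lt 1 + Rt K - (\<Sum>k=2..K. fric_diss \<alpha> x \<rho> \<mu> v \<sigma> k t)"
      using S4 S5 by linarith
    have v3: "dE = - (\<Sum>k=1..K. (F k)^2 / Za k + (G k)^2 / Zb k) - (\<Sum>k=2..K. fric_diss \<alpha> x \<rho> \<mu> v \<sigma> k t)
       + Lt 1 + Rt K"
    proof -
      have "(\<Sum>k=1..K. (F k)^2 / Za k + (G k)^2 / Zb k) = (\<Sum>k=1..K. (Fflux r0 \<alpha> x \<rho> \<mu> v \<sigma> k t)^2 / Zs \<rho> \<mu> k (x k)
                          + (Gflux K rL \<alpha> x \<rho> \<mu> v \<sigma> k t)^2 / Zs \<rho> \<mu> k (x (Suc k)))"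
        unfolding F_def G_def Za_def Zb_def by (rule refl)
      then show ?thesis unfolding dE_def using Lt1 RtK by linarith
    qed
    show ?thesis using v1 v2 v3 by linarith
  qed
  have "dE \<le> 0"
  proof -
    have "(\<Sum>k=2..K. fric_diss \<alpha> x \<rho> \<mu> v \<sigma> k t) \<ge> 0" by (rule sum_nonneg) (use fric_nn in auto)
    moreover have "(1 - r0^2) / Zs \<rho> \<mu> 1 (x 1) * (p0 x \<rho> \<mu> v \<sigma> t)^2 \<ge> 0" using r0n Z1 by simp
    moreover have "(1 - rL^2) / Zs \<rho> \<mu> K (x (Suc K)) * (qL K x \<rho> \<mu> v \<sigma> t)^2 \<ge> 0" using rLn ZK by simp
    ultimately show ?thesis using Fnn unfolding dE_def F_def G_def Za_def Zb_def by linarith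
  qed
  then show "let dE = - (\<Sum>k=1..K. (Fflux r0 \<alpha> x \<rho> \<mu> v \<sigma> k t)^2 / Zs \<rho> \<mu> k (x k)
                          + (Gflux K rL \<alpha> x \<rho> \<mu> v \<sigma> k t)^2 / Zs \<rho> \<mu> k (x (Suc k)))
               - (\<Sum>k=2..K. fric_diss \<alpha> x \<rho> \<mu> v \<sigma> k t)
               - (1 - r0^2) / Zs \<rho> \<mu> 1 (x 1) * (p0 x \<rho> \<mu> v \<sigma> t)^2
               - (1 - rL^2) / Zs \<rho> \<mu> K (x (Suc K)) * (qL K x \<rho> \<mu> v \<sigma> t)^2
      in ((\<lambda>s. energy K x \<rho> \<mu> v \<sigma> s) has_real_derivative dE) (at t within {0..}) \<and> dE \<le> 0"
    using dE val unfolding dE_def Let_def by simp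
qed

end
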